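(* The limit $\displaystyle\lim_{n\to\infty}\Big(\operatorname{li}(n)-\sum_{k=1}^n\frac{1}{H_k-\gamma}\Big)$ (over positive integers $n$) exists, where $\operatorname{li}(x)=\int_0^x\frac{dt}{\log t}$ (Cauchy principal value), $H_k=\sum_{j=1}^k\frac1j$, and $\gamma$ is the Euler–Mascheroni constant. *)

theory Defs
  imports "HOL-Analysis.Analysis"
begin

text \<open>Logarithmic integral as a Cauchy principal value at the singularity t = 1:
  li x = lim_{e -> 0+} ( int_0^{1-e} dt/ln t + int_{1+e}^x dt/ln t ), intended for x > 1.
  (The value at x = 1 is junk; it does not affect limits as x -> infinity.)\<close>
definition li :: "real \<Rightarrow> real" where
  "li x = Lim (at_right 0)
     (\<lambda>e. integral {0..1 - e} (\<lambda>t. 1 / ln t) + integral {1 + e..x} (\<lambda>t. 1 / ln t))"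

end

theory Submission
  imports Defs "HOL-Real_Asymp.Real_Asymp"
begin

definition hh :: "real \<Rightarrow> real" where
  "hh t = (if t = 1 then 1/2 else 1/ln t - 1/(t-1))"

definition GG :: "real \<Rightarrow> real" where
  "GG x = integral {0..x} hh"

lemma hh_cont: "continuous_on {0..} hh"
proof (rule continuous_on_eq_continuous_within[THEN iffD2], intro ballI)
  fix x :: real assume x: "x \<in> {0..}"
  consider "x = 0" | "x = 1" | "x > 0" "x \<noteq> 1" using x by force
  then show "continuous (at x within {0..}) hh"
  proof cases
    case 1
    have lim: "((\<lambda>t::real. 1/ln t - 1/(t-1)) \<longlongrightarrow> 1) (at_right 0)" by real_asymp
    have ev: "eventually (\<lambda>t::real. t \<noteq> 1) (at_right 0)"
      unfolding eventually_at_right[OF zero_less_one] by (intro exI[of _ 1]) auto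
    have "(hh \<longlongrightarrow> 1) (at_right 0)"
      by (rule tendsto_cong[THEN iffD1, OF _ lim]) (use ev in \<open>auto elim!: eventually_mono simp: hh_def\<close>)
    moreover have "hh 0 = 1" by (simp add: hh_def)
    ultimately show ?thesis using 1
      by (simp add: continuous_within at_within_Ici_at_right)
  next
    case 2
    have lim: "((\<lambda>t::real. 1/ln t - 1/(t-1)) \<longlongrightarrow> 1/2) (at 1)" by real_asymp
    have "(hh \<longlongrightarrow> hh 1) (at 1)"
      using lim by (subst LIM_equal[where g="\<lambda>t::real. 1/ln t - 1/(t-1)"]) (auto simp: hh_def)
    then have "isCont hh 1" by (simp only: continuous_at)
    then show ?thesis using 2 continuous_at_imp_continuous_within by blast
  next
    case 3
    have c: "isCont (\<lambda>t::real. 1/ln t - 1/(t-1)) x"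
      using 3 by (auto intro!: continuous_intros)
    have ev: "eventually (\<lambda>t. hh t = 1/ln t - 1/(t-1)) (nhds x)"
      using t1_space_nhds[OF 3(2)] by (auto elim!: eventually_mono simp: hh_def)
    have "isCont hh x" using isCont_cong[OF ev] c by simp
    then show ?thesis by (rule continuous_at_imp_continuous_within)
  qed
qed

lemma GG_deriv:
  assumes "x > 0"
  shows "(GG has_real_derivative hh x) (at x)"
proof -
  have c: "continuous_on {0..x+1} hh"
    by (rule continuous_on_subset[OF hh_cont]) auto
  have "(GG has_real_derivative hh x) (at x within {0..x+1})"
    unfolding GG_def using assms by (intro integral_has_real_derivative c) auto
  moreover have "at x within {0..x+1} = at x"
    using assms by (intro at_within_interior) auto
  ultimately show ?thesis by simp
qed

lemma hh_integrable: "a \<ge> 0 \<Longrightarrow> hh integrable_on {a..b}"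
  by (rule integrable_continuous_interval, rule continuous_on_subset[OF hh_cont]) auto

lemma li_eq:
  assumes x: "x > 1"
  shows "li x = GG x + ln (x - 1)"
proof -
  have int1: "integral {0..1-e} (\<lambda>t. 1/ln t) = GG (1-e) + ln e" if e: "0 < e" "e < 1" for e
  proof -
    have a: "(hh has_integral GG (1-e)) {0..1-e}"
      unfolding GG_def using hh_integrable[of 0 "1-e"] by (simp add: integrable_integral)
    have b: "((\<lambda>t. 1/(t-1)) has_integral (ln (1 - (1-e)) - ln (1 - 0))) {0..1-e}"
    proof (rule fundamental_theorem_of_calculus)
      show "0 \<le> 1 - e" using e by simp
      fix t assume t: "t \<in> {0..1-e}"
      have "((\<lambda>t. ln (1 - t)) has_real_derivative (1 / (1 - t) * (0 - 1))) (at t within {0..1-e})"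
        using t e by (intro derivative_eq_intros) auto
      then show "((\<lambda>t. ln (1 - t)) has_vector_derivative 1/(t-1)) (at t within {0..1-e})"
        using t e by (simp add: has_real_derivative_iff_has_vector_derivative[symmetric] field_simps)
          (metis divide_minus_right minus_diff_eq)
    qed
    have "((\<lambda>t. hh t + 1/(t-1)) has_integral (GG (1-e) + ln e)) {0..1-e}"
      using has_integral_add[OF a b] by simp
    then have "((\<lambda>t. 1/ln t) has_integral (GG (1-e) + ln e)) {0..1-e}"
      by (rule has_integral_eq[rotated]) (use e in \<open>auto simp: hh_def\<close>)
    then show ?thesis by (rule integral_unique)
  qed
  have int2: "integral {1+e..x} (\<lambda>t. 1/ln t) = GG x - GG (1+e) + ln (x-1) - ln e"
    if e: "0 < e" "e < x - 1" for e
  proof -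
    have "integral {0..1+e} hh + integral {1+e..x} hh = integral {0..x} hh"
      using e Henstock_Kurzweil_Integration.integral_combine[where f=hh and a=0 and c="1+e" and b=x] hh_integrable[of 0 x] by auto
    then have "integral {1+e..x} hh = GG x - GG (1+e)" unfolding GG_def by simp
    then have a: "(hh has_integral (GG x - GG (1+e))) {1+e..x}"
      using hh_integrable[of "1+e" x] e by (metis integrable_integral less_eq_real_def add_nonneg_nonneg zero_le_one)
    have b: "((\<lambda>t. 1/(t-1)) has_integral (ln (x - 1) - ln ((1+e) - 1))) {1+e..x}"
    proof (rule fundamental_theorem_of_calculus)
      show "1 + e \<le> x" using e by simp
      fix t assume t: "t \<in> {1+e..x}"
      have "((\<lambda>t. ln (t - 1)) has_real_derivative (1 / (t - 1) * (1 - 0))) (at t within {1+e..x})"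
        using t e by (intro derivative_eq_intros) auto
      then show "((\<lambda>t. ln (t - 1)) has_vector_derivative 1/(t-1)) (at t within {1+e..x})"
        by (simp add: has_real_derivative_iff_has_vector_derivative[symmetric])
    qed
    have "((\<lambda>t. hh t + 1/(t-1)) has_integral (GG x - GG (1+e) + (ln (x-1) - ln e))) {1+e..x}"
      using has_integral_add[OF a b] by simp
    then have "((\<lambda>t. 1/ln t) has_integral (GG x - GG (1+e) + (ln (x-1) - ln e))) {1+e..x}"
      by (rule has_integral_eq[rotated]) (use e in \<open>auto simp: hh_def\<close>)
    then show ?thesis by (simp add: integral_unique)
  qed
  have ev: "eventually (\<lambda>e. integral {0..1 - e} (\<lambda>t. 1 / ln t) + integral {1 + e..x} (\<lambda>t. 1 / ln t)
      = GG (1-e) - GG (1+e) + (GG x + ln (x-1))) (at_right 0)"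
  proof -
    have "0 < min 1 (x-1)" using x by simp
    then show ?thesis unfolding eventually_at_right[OF \<open>0 < min 1 (x-1)\<close>]
      by (intro exI[of _ "min 1 (x-1)"]) (auto simp: int1 int2)
  qed
  have cont1: "isCont GG 1" using GG_deriv[of 1] by (simp add: DERIV_isCont)
  have l1: "((\<lambda>e. GG (1-e)) \<longlongrightarrow> GG 1) (at_right 0)"
    by (rule isCont_tendsto_compose[OF cont1]) (auto intro!: tendsto_eq_intros)
  have l2: "((\<lambda>e. GG (1+e)) \<longlongrightarrow> GG 1) (at_right 0)"
    by (rule isCont_tendsto_compose[OF cont1]) (auto intro!: tendsto_eq_intros)
  have "((\<lambda>e. GG (1-e) - GG (1+e) + (GG x + ln (x-1))) \<longlongrightarrow> GG 1 - GG 1 + (GG x + ln (x-1))) (at_right 0)"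
    by (intro tendsto_intros l1 l2)
  then have lim': "((\<lambda>e. GG (1-e) - GG (1+e) + (GG x + ln (x-1))) \<longlongrightarrow> GG x + ln (x-1)) (at_right 0)"
    by simp
  have "((\<lambda>e. integral {0..1 - e} (\<lambda>t. 1 / ln t) + integral {1 + e..x} (\<lambda>t. 1 / ln t))
     \<longlongrightarrow> GG x + ln (x-1)) (at_right 0)"
    by (subst tendsto_cong[OF ev]) (rule lim')
  then show ?thesis unfolding li_def by (intro tendsto_Lim) auto
qed

lemma Li_deriv:
  assumes "x > 1"
  shows "((\<lambda>x. GG x + ln (x-1)) has_real_derivative 1/ln x) (at x)"
proof -
  have "((\<lambda>x. GG x + ln (x-1)) has_real_derivative hh x + 1/(x-1) * (1 - 0)) (at x)"
    using assms by (intro derivative_intros GG_deriv) auto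
  moreover have "hh x + 1/(x-1) * (1 - 0) = 1/ln x" using assms by (simp add: hh_def)
  ultimately show ?thesis by simp
qed

lemma li_step:
  fixes k :: real
  assumes k: "k \<ge> 3"
  shows "1/ln k \<le> li k - li (k-1)" "li k - li (k-1) \<le> 1/ln (k-1)"
proof -
  have "\<exists>z. k-1 < z \<and> z < k \<and> (GG k + ln (k-1)) - (GG (k-1) + ln (k-1-1)) = (k - (k-1)) * (1/ln z)"
    by (rule MVT2[where f="\<lambda>x. GG x + ln (x-1)"]) (use k in \<open>auto intro!: Li_deriv\<close>)
  then obtain z where z: "k-1 < z" "z < k" "li k - li (k-1) = 1/ln z"
    using k li_eq[of k] li_eq[of "k-1"] by auto
  have l1: "0 < ln (k-1)" using k by simp
  have "ln (k-1) \<le> ln z" "ln z \<le> ln k" using z k by auto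
  then show "1/ln k \<le> li k - li (k-1)" "li k - li (k-1) \<le> 1/ln (k-1)"
    using l1 z(3) by (auto intro!: divide_left_mono)
qed

lemma alg_bound:
  fixes M L a k :: real
  assumes "0 < M" "M \<le> L" "L \<le> a" "a \<le> L + 1/k" "1/k \<le> L - M" "k > 0"
  shows "1/L - 1/a \<le> 1/M - 1/L"
proof -
  have L: "L > 0" "a > 0" using assms by auto
  have "1/L - 1/a = (a - L)/(L*a)" using L by (simp add: field_simps)
  also have "\<dots> \<le> (L - M)/(L*a)" using assms L by (intro divide_right_mono) auto
  also have "\<dots> \<le> (L - M)/(L*M)" using assms L
    by (intro divide_left_mono mult_left_mono mult_pos_pos) auto
  also have "\<dots> = 1/M - 1/L"
  proof -
    have "L \<noteq> 0" "M \<noteq> 0" using L assms by auto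
    then show ?thesis by (simp add: field_simps)
  qed
  finally show ?thesis .
qed

lemma harm_bounds:
  fixes k :: nat
  assumes "k \<ge> 1"
  shows "ln (real k) \<le> harm k - euler_mascheroni" "harm k - euler_mascheroni \<le> ln (real k) + 1/k"
proof -
  obtain n where n: "k = Suc n" using assms by (cases k) auto
  have "euler_mascheroni \<le> harm (Suc n) - ln (real (Suc n))"
  proof (rule decseq_ge[OF decseq_harm_diff_ln])
    show "(\<lambda>n. harm (Suc n) - ln (real (Suc n))) \<longlonglongrightarrow> (euler_mascheroni::real)"
      using LIMSEQ_Suc[OF euler_mascheroni_LIMSEQ] by simp
  qed
  then show "ln (real k) \<le> harm k - euler_mascheroni" using n by simp
  have "euler_mascheroni \<ge> harm (Suc n) - ln (real_of_nat (n + 2)) + 1/real_of_nat (2 * (n + 2))"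
    by (rule euler_mascheroni_lower)
  moreover have "ln (real k + 1) - ln (real k) < 1 / real k"
    using assms by (intro ln_diff_le_inverse) auto
  moreover have "1/real_of_nat (2 * (n + 2)) \<ge> 0" by simp
  moreover have "ln (real_of_nat (n+2)) = ln (real k + 1)" using n by simp
  moreover have "harm (Suc n) = (harm k :: real)" using n by simp
  ultimately show "harm k - euler_mascheroni \<le> ln (real k) + 1/k" using n by linarith
qed

lemma ln_gap:
  fixes k :: real
  assumes "k > 1"
  shows "1/k \<le> ln k - ln (k-1)"
proof -
  have "ln ((k-1)/k) \<le> (k-1)/k - 1" using assms by (intro ln_le_minus_one) auto
  moreover have "ln ((k-1)/k) = ln (k-1) - ln k" using assms by (simp add: ln_div)
  moreover have "(k-1)/k - 1 = - (1/k)" using assms by (simp add: field_simps)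
  ultimately show ?thesis by linarith
qed

definition dd :: "nat \<Rightarrow> real" where
  "dd k = li (real k) - li (real k - 1) - 1 / (harm k - euler_mascheroni)"

lemma dd_bounds:
  assumes "k \<ge> 3"
  shows "0 \<le> dd k" "dd k \<le> 2 * (1/ln (real k - 1) - 1/ln (real k))"
proof -
  have k: "real k \<ge> 3" using assms by simp
  note st = li_step[OF k]
  have k1: "k \<ge> 1" using assms by simp
  note hb = harm_bounds[OF k1]
  have M: "0 < ln (real k - 1)" using k by simp
  have mle: "ln (real k - 1) \<le> ln (real k)" using k by simp
  have gap: "1/real k \<le> ln (real k) - ln (real k - 1)" using k by (intro ln_gap) auto
  have a1: "1/ln (real k) - 1/(harm k - euler_mascheroni) \<le> 1/ln (real k - 1) - 1/ln (real k)"
    by (rule alg_bound[OF M mle _ _ gap]) (use hb assms in auto)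
  have Lp: "0 < ln (real k)" using M mle by linarith
  have ap: "0 < harm k - (euler_mascheroni::real)" using Lp hb(1) assms by linarith
  have "1/(harm k - euler_mascheroni) \<le> 1/ln (real k)"
    using hb(1) assms Lp ap by (intro divide_left_mono mult_pos_pos) auto
  then have a0: "0 \<le> 1/ln (real k) - 1/(harm k - euler_mascheroni)" by simp
  show "0 \<le> dd k" using st a0 unfolding dd_def by linarith
  have aux: "x \<le> p \<Longrightarrow> q - r \<le> p - q \<Longrightarrow> x - r \<le> 2*p-2*q" for x p q r :: real by linarith
  show "dd k \<le> 2 * (1/ln (real k - 1) - 1/ln (real k))" unfolding dd_def right_diff_distrib by (rule aux[OF st(2) a1])
qed

definition SS :: "nat \<Rightarrow> real" where
  "SS n = (\<Sum>k=1..n. 1 / (harm k - (euler_mascheroni::real)))"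

definition AA :: "nat \<Rightarrow> real" where
  "AA n = (\<Sum>k=3..n+2. dd k)"

lemma AA_Suc: "AA (Suc n) = AA n + dd (n+3)"
  unfolding AA_def by (simp add: sum.cl_ivl_Suc) (simp add: numeral_3_eq_3)

lemma decomp: "li (real (n+2)) - SS (n+2) = (li 2 - SS 2) + AA n"
proof (induction n)
  case 0
  then show ?case by (simp add: AA_def numeral_2_eq_2)
next
  case (Suc n)
  have s: "SS (Suc n + 2) = SS (n+2) + 1 / (harm (n+3) - euler_mascheroni)"
    unfolding SS_def by (simp add: sum.cl_ivl_Suc) (simp add: numeral_3_eq_3)
  have d: "dd (n+3) = li (real (n+3)) - li (real (n+2)) - 1 / (harm (n+3) - euler_mascheroni)"
    unfolding dd_def by simp
  show ?case using Suc s d AA_Suc[of n] by (simp add: algebra_simps)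
qed

lemma AA_bound: "AA n \<le> 2 * (1/ln 2 - 1/ln (real (n+2)))"
proof (induction n)
  case 0
  then show ?case by (simp add: AA_def)
next
  case (Suc n)
  have A: "dd (n+3) \<le> 2 * (1/ln (real (n+3) - 1) - 1/ln (real (n+3)))"
    by (rule dd_bounds) simp
  have e1: "real (n+3) - 1 = 2 + real n" by simp
  have e2: "real (n+3) = 3 + real n" by simp
  have e3: "real (Suc n + 2) = 3 + real n" by simp
  have e4: "real (n + 2) = 2 + real n" by simp
  have B: "dd (n+3) \<le> 2 * (1/ln (2 + real n)) - 2 * (1/ln (3 + real n))"
    using A unfolding e1 unfolding e2 right_diff_distrib .
  have C: "AA n \<le> 2 * (1/ln 2) - 2 * (1/ln (2 + real n))"
    using Suc.IH unfolding e4 right_diff_distrib .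
  show ?case unfolding AA_Suc e3 right_diff_distrib using B C by linarith
qed

lemma AA_convergent: "convergent AA"
proof -
  have "incseq AA"
    by (rule incseq_SucI) (use dd_bounds(1)[of "_ + 3"] in \<open>auto simp: AA_Suc\<close>)
  moreover have "\<forall>n. AA n \<le> 2 / ln 2"
  proof
    fix n
    have "0 < ln (2 + real n)" by simp
    then have h: "0 \<le> 2/ln (2 + real n)" by simp
    have "AA n \<le> 2/ln 2 - 2/ln (2 + real n)" using AA_bound[of n] by (simp add: algebra_simps)
    then show "AA n \<le> 2 / ln 2" using h by linarith
  qed
  ultimately obtain L where "AA \<longlonglongrightarrow> L" by (rule incseq_convergent)
  then show ?thesis by (rule convergentI)
qed

theorem lemma7p12:
  shows "convergent (\<lambda>n::nat. li (real n) - (\<Sum>k=1..n. 1 / (harm k - (euler_mascheroni::real))))"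
proof -
  have "convergent (\<lambda>n. (li 2 - SS 2) + AA n)"
    using AA_convergent by (intro convergent_add convergent_const)
  then have "convergent (\<lambda>n. li (real (n+2)) - SS (n+2))"
    by (simp only: decomp)
  then have "convergent (\<lambda>n. li (real n) - SS n)"
    by (rule convergent_ignore_initial_segment[THEN iffD1])
  then show ?thesis unfolding SS_def .
qed

end
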